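(* Let $\Gamma=(V,\mathcal E)$ be a $\mathbb Z^d$-periodic graph with fundamental graph $\Gamma_*=(V_*,\mathcal E_* )$, $\nu=\#V_*$. (i) There exists a subgraph $T=(V_T,\mathcal E_T)$ of $\Gamma$ such that $T$ is a tree (connected and without cycles) and $V_T$ consists of $\nu$ vertices of $\Gamma$ which are pairwise not $\mathbb Z^d$-equivalent. (ii) For edge indices defined with respect to the fundamental vertex set $V_0=V_T$ of such a tree, the number $\beta=\sum_{v\in V_*}\beta_v/\varkappa_v$ (where $\beta_v$ is the number of bridges of $\Gamma_*$ starting at $v$) satisfies $$\beta\le 1\ \text{ if } \nu=1,\qquad \beta\le \nu-\sum_{v\in V_*}\frac{1}{\varkappa_v}\ \text{ if }\nu\ge2.$$
   Context: A $\mathbb Z^d$-periodic graph is a connected infinite graph $\Gamma=(V,\mathcal E)$, possibly with loops and multiple edges, on which $\mathbb Z^d$ acts freely by graph automorphisms ($v\mapsto v+m$), with all vertex degrees finite and finite quotient (fundamental) graph $\Gamma_*=\Gamma/\mathbb Z^d=(V_*,\mathcal E_* )$. Each undirected edge is regarded as two oppositely oriented edges; $\mathcal A$ is the set of oriented edges, $\mathcal A_*=\mathcal A/\mathbb Z^d$; the degree $\varkappa_v$ is the number of oriented edges starting at $v$. Given a set $V_0$ of $\nu$ pairwise non-equivalent vertices, each $v\in V$ is uniquely $v=v_0+[v]$ with $v_0\in V_0$, $[v]\in\mathbb Z^d$; the index of an oriented edge $\mathbf e=(u,v)$ is $\tau(\mathbf e)=[v]-[u]\in\mathbb Z^d$,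 which is invariant under the $\mathbb Z^d$-action and so defined on $\mathcal A_*$. A bridge is an oriented edge with nonzero index. *)

theory Defs
  imports "HOL-Analysis.Analysis"
begin

(* Vertices are all elements of type 'v, oriented
   edges are all elements of type 'e.  Each oriented edge e goes from src e to
   tgt e; rv e is the oppositely oriented copy of the same undirected edge
   (a fixed-point-free involution, so a loop also gives two oriented edges).
   Z^d = int ^ 'd acts by actV on vertices and actE on oriented edges. *)

fun walk_from :: "('e \<Rightarrow> 'v) \<Rightarrow> ('e \<Rightarrow> 'v) \<Rightarrow> 'v \<Rightarrow> 'e list \<Rightarrow> 'v \<Rightarrow> bool" where
  "walk_from src tgt u [] w = (u = w)"
| "walk_from src tgt u (e # es) w = (src e = u \<and> walk_from src tgt (tgt e) es w)"

definition orbV :: "(int^'d \<Rightarrow> 'v \<Rightarrow> 'v) \<Rightarrow> 'v \<Rightarrow> 'v set" where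
  "orbV actV v = range (\<lambda>m. actV m v)"

definition orbE :: "(int^'d \<Rightarrow> 'e \<Rightarrow> 'e) \<Rightarrow> 'e \<Rightarrow> 'e set" where
  "orbE actE e = range (\<lambda>m. actE m e)"

definition periodic_graph ::
  "('e \<Rightarrow> 'v) \<Rightarrow> ('e \<Rightarrow> 'v) \<Rightarrow> ('e \<Rightarrow> 'e) \<Rightarrow>
   (int^'d \<Rightarrow> 'v \<Rightarrow> 'v) \<Rightarrow> (int^'d \<Rightarrow> 'e \<Rightarrow> 'e) \<Rightarrow> bool" where
  "periodic_graph src tgt rv actV actE \<longleftrightarrow>
     (\<forall>e. rv (rv e) = e \<and> rv e \<noteq> e \<and> src (rv e) = tgt e) \<and>
     (\<forall>v. actV 0 v = v) \<and> (\<forall>m n v. actV (m + n) v = actV m (actV n v)) \<and>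
     (\<forall>e. actE 0 e = e) \<and> (\<forall>m n e. actE (m + n) e = actE m (actE n e)) \<and>
     (\<forall>m e. src (actE m e) = actV m (src e) \<and> tgt (actE m e) = actV m (tgt e)
            \<and> rv (actE m e) = actE m (rv e)) \<and>
     (\<forall>m v. actV m v = v \<longrightarrow> m = 0) \<and>
     (\<forall>v. finite {e. src e = v}) \<and>
     finite (range (orbV actV)) \<and>
     (\<forall>u w. \<exists>es. walk_from src tgt u es w)"

definition Vstar :: "(int^'d \<Rightarrow> 'v \<Rightarrow> 'v) \<Rightarrow> 'v set set" where
  "Vstar actV = range (orbV actV)"

definition Astar :: "(int^'d \<Rightarrow> 'e \<Rightarrow> 'e) \<Rightarrow> 'e set set" where
  "Astar actE = range (orbE actE)"

definition is_subgraph :: "('e \<Rightarrow> 'v) \<Rightarrow> ('e \<Rightarrow> 'v) \<Rightarrow> ('e \<Rightarrow> 'e) \<Rightarrow> 'v set \<Rightarrow> 'e set \<Rightarrow> bool" where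
  "is_subgraph src tgt rv VT ET \<longleftrightarrow>
     (\<forall>e\<in>ET. src e \<in> VT \<and> tgt e \<in> VT \<and> rv e \<in> ET)"

definition sub_connected :: "('e \<Rightarrow> 'v) \<Rightarrow> ('e \<Rightarrow> 'v) \<Rightarrow> 'v set \<Rightarrow> 'e set \<Rightarrow> bool" where
  "sub_connected src tgt VT ET \<longleftrightarrow>
     (\<forall>u\<in>VT. \<forall>w\<in>VT. \<exists>es. set es \<subseteq> ET \<and> walk_from src tgt u es w)"

(* a cycle: nonempty closed walk with pairwise distinct vertices and pairwise
   distinct undirected edges (covers loops and pairs of parallel edges) *)
definition has_cycle :: "('e \<Rightarrow> 'v) \<Rightarrow> ('e \<Rightarrow> 'v) \<Rightarrow> ('e \<Rightarrow> 'e) \<Rightarrow> 'e set \<Rightarrow> bool" where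
  "has_cycle src tgt rv ET \<longleftrightarrow>
     (\<exists>es. es \<noteq> [] \<and> set es \<subseteq> ET \<and> walk_from src tgt (src (hd es)) es (src (hd es)) \<and>
        distinct (map src es) \<and>
        (\<forall>i<length es. \<forall>j<length es. i \<noteq> j \<longrightarrow> es ! i \<noteq> es ! j \<and> es ! i \<noteq> rv (es ! j)))"

definition is_tree :: "('e \<Rightarrow> 'v) \<Rightarrow> ('e \<Rightarrow> 'v) \<Rightarrow> ('e \<Rightarrow> 'e) \<Rightarrow> 'v set \<Rightarrow> 'e set \<Rightarrow> bool" where
  "is_tree src tgt rv VT ET \<longleftrightarrow>
     is_subgraph src tgt rv VT ET \<and> sub_connected src tgt VT ET \<and> \<not> has_cycle src tgt rv ET"

definition fundamental_vertices :: "(int^'d \<Rightarrow> 'v \<Rightarrow> 'v) \<Rightarrow> 'v set \<Rightarrow> bool" where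
  "fundamental_vertices actV V0 \<longleftrightarrow>
     finite V0 \<and> card V0 = card (Vstar actV) \<and>
     (\<forall>u\<in>V0. \<forall>w\<in>V0. u \<noteq> w \<longrightarrow> orbV actV u \<noteq> orbV actV w)"

definition coord :: "(int^'d \<Rightarrow> 'v \<Rightarrow> 'v) \<Rightarrow> 'v set \<Rightarrow> 'v \<Rightarrow> int^'d" where
  "coord actV V0 v = (THE m. \<exists>v0\<in>V0. actV m v0 = v)"

definition edge_index :: "('e \<Rightarrow> 'v) \<Rightarrow> ('e \<Rightarrow> 'v) \<Rightarrow> (int^'d \<Rightarrow> 'v \<Rightarrow> 'v) \<Rightarrow> 'v set \<Rightarrow> 'e \<Rightarrow> int^'d" where
  "edge_index src tgt actV V0 e = coord actV V0 (tgt e) - coord actV V0 (src e)"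

definition kappa_star :: "('e \<Rightarrow> 'v) \<Rightarrow> (int^'d \<Rightarrow> 'v \<Rightarrow> 'v) \<Rightarrow> (int^'d \<Rightarrow> 'e \<Rightarrow> 'e) \<Rightarrow> 'v set \<Rightarrow> nat" where
  "kappa_star src actV actE C = card {A \<in> Astar actE. \<exists>e\<in>A. src e \<in> C}"

(* beta_v: number of bridges (oriented edges with nonzero index) of Gamma_* starting at C *)
definition beta_star :: "('e \<Rightarrow> 'v) \<Rightarrow> ('e \<Rightarrow> 'v) \<Rightarrow> (int^'d \<Rightarrow> 'v \<Rightarrow> 'v) \<Rightarrow> (int^'d \<Rightarrow> 'e \<Rightarrow> 'e)
    \<Rightarrow> 'v set \<Rightarrow> 'v set \<Rightarrow> nat" where
  "beta_star src tgt actV actE V0 C =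
     card {A \<in> Astar actE. \<exists>e\<in>A. src e \<in> C \<and> edge_index src tgt actV V0 e \<noteq> 0}"

end

theory Submission
  imports Defs
begin

lemma walk_append:
  "walk_from src tgt a (xs @ ys) c \<longleftrightarrow> (\<exists>b. walk_from src tgt a xs b \<and> walk_from src tgt b ys c)"
  by (induction xs arbitrary: a) auto

lemma walk_props:
  assumes "walk_from src tgt a es b"
  shows "(\<forall>i. Suc i < length es \<longrightarrow> tgt (es!i) = src (es!Suc i)) \<and>
         (es \<noteq> [] \<longrightarrow> src (hd es) = a \<and> tgt (last es) = b)"
  using assms
proof (induction es arbitrary: a)
  case Nil then show ?case by simp
next
  case (Cons e es)
  then show ?case
    by (cases es) (auto simp: nth_Cons split: nat.split)
qed

lemma closed_walk_next:
  assumes cw: "walk_from src tgt (src (hd es)) es (src (hd es))" and ne: "es \<noteq> []" and i: "i < length es"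
  shows "tgt (es!i) = src (es!((Suc i) mod length es))"
proof (cases "Suc i < length es")
  case True then show ?thesis using walk_props[OF cw] by simp
next
  case False
  then have si: "Suc i = length es" using i by simp
  then have "i = length es - 1" by simp
  then have "es!i = last es" using ne by (simp add: last_conv_nth)
  moreover have "es!((Suc i) mod length es) = hd es" using si ne by (simp add: hd_conv_nth)
  ultimately show ?thesis using walk_props[OF cw] ne by simp
qed

lemma walk_exit:
  assumes "walk_from src tgt a es b" "a \<in> S" "b \<notin> S"
  shows "\<exists>e\<in>set es. src e \<in> S \<and> tgt e \<notin> S"
  using assms by (induction es arbitrary: a) auto

lemma add_leaf_acyclic:
  assumes sub: "is_subgraph src tgt rv VT ET" and nc: "\<not> has_cycle src tgt rv ET"
    and w: "w \<notin> VT" and su: "src e = u" "u \<in> VT" "tgt e = w"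
    and rvv: "\<And>e. rv (rv e) = e" "\<And>e. rv e \<noteq> e" "\<And>e. src (rv e) = tgt e" "\<And>e. tgt (rv e) = src e"
  shows "\<not> has_cycle src tgt rv (insert e (insert (rv e) ET))"
proof
  assume "has_cycle src tgt rv (insert e (insert (rv e) ET))"
  then obtain es where ne: "es \<noteq> []" and st: "set es \<subseteq> insert e (insert (rv e) ET)"
    and cw: "walk_from src tgt (src (hd es)) es (src (hd es))"
    and dm: "distinct (map src es)"
    and dd: "\<forall>i<length es. \<forall>j<length es. i \<noteq> j \<longrightarrow> es ! i \<noteq> es ! j \<and> es ! i \<noteq> rv (es ! j)"
    unfolding has_cycle_def by blast
  have uw: "u \<noteq> w" using su w by auto
  have srcw: "\<And>f. f \<in> set es \<Longrightarrow> src f = w \<Longrightarrow> f = rv e"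
    using st sub w su unfolding is_subgraph_def by auto
  have tgtw: "\<And>f. f \<in> set es \<Longrightarrow> tgt f = w \<Longrightarrow> f = e"
    using st sub w su rvv uw unfolding is_subgraph_def by auto
  have noe: "\<forall>i<length es. es!i \<noteq> e"
  proof (intro allI impI notI)
    fix i assume i: "i < length es" and ei: "es!i = e"
    define j where "j = Suc i mod length es"
    have j: "j < length es" using ne j_def by simp
    have "src (es!j) = w" using closed_walk_next[OF cw ne i] ei su j_def by simp
    then have ej: "es!j = rv e" using srcw j by simp
    show False
    proof (cases "j = i")
      case True then show False using ei ej rvv by metis
    next
      case False then show False using dd i j ei ej rvv by metis
    qed
  qed
  have nor: "\<forall>i<length es. es!i \<noteq> rv e"
  proof (intro allI impI notI)
    fix i assume i: "i < length es" and ei: "es!i = rv e"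
    define j where "j = (if i = 0 then length es - 1 else i - 1)"
    have j: "j < length es" using ne i by (auto simp: j_def)
    have sj: "Suc j mod length es = i" using ne i by (auto simp: j_def)
    have "tgt (es!j) = w" using closed_walk_next[OF cw ne j] sj ei rvv su by simp
    then have "es!j = e" using tgtw j by simp
    then show False using noe j by blast
  qed
  have "set es \<subseteq> ET"
  proof
    fix x assume "x \<in> set es"
    then obtain i where "i < length es" "es!i = x" by (metis in_set_conv_nth)
    then show "x \<in> ET" using noe nor st \<open>x \<in> set es\<close> by auto
  qed
  then have "has_cycle src tgt rv ET" unfolding has_cycle_def
    by (intro exI[of _ es]) (use ne cw dm dd in simp)
  then show False using nc by simp
qed

lemma ratio1: "B \<subseteq> K \<Longrightarrow> real (card B) / real (card K) \<le> 1"
proof (cases "finite K")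
  case True
  assume "B \<subseteq> K"
  then have "card B \<le> card K" using True card_mono by blast
  then have "real (card B) \<le> real (card K)" by simp
  then show ?thesis by (cases "card K = 0") (simp_all add: divide_le_eq_1)
next
  case False
  then show ?thesis by simp
qed

lemma ratio2: "B \<subseteq> K - {a} \<Longrightarrow> a \<in> K \<Longrightarrow> real (card B) / real (card K) \<le> 1 - 1 / real (card K)"
proof (cases "finite K")
  case True
  assume a: "B \<subseteq> K - {a}" "a \<in> K"
  have "finite (K - {a})" using True by simp
  then have "card B \<le> card (K - {a})" using a(1) card_mono by blast
  moreover have "card (K - {a}) = card K - 1" using a(2) by (simp add: card_Diff_singleton)
  moreover have "card K \<noteq> 0" using True a(2) by auto
  ultimately have cb: "card B + 1 \<le> card K" by linarith
  then have pos: "real (card K) > 0" by simp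
  have "real (card B) \<le> real (card K) - 1" using cb by linarith
  then have "real (card B) / real (card K) \<le> (real (card K) - 1) / real (card K)"
    using pos by (simp add: divide_right_mono)
  also have "\<dots> = 1 - 1 / real (card K)" using pos by (simp add: diff_divide_distrib)
  finally show ?thesis .
next
  case False
  then show ?thesis by simp
qed

context
  fixes src tgt :: "'e \<Rightarrow> 'v" and rv :: "'e \<Rightarrow> 'e"
    and actV :: "int^'d::finite \<Rightarrow> 'v \<Rightarrow> 'v" and actE :: "int^'d \<Rightarrow> 'e \<Rightarrow> 'e"
  assumes pg: "periodic_graph src tgt rv actV actE"
begin

lemma pgf1: "rv (rv e) = e"
  using pg unfolding periodic_graph_def by auto

lemma pgf2: "rv e \<noteq> e"
  using pg unfolding periodic_graph_def by auto

lemma pgf3: "src (rv e) = tgt e"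
  using pg unfolding periodic_graph_def by auto

lemma pgf4: "actV 0 v = v"
  using pg unfolding periodic_graph_def by auto

lemma pgf5: "actV (m + n) v = actV m (actV n v)"
  using pg unfolding periodic_graph_def by auto

lemma pgf6: "src (actE m e) = actV m (src e)"
  using pg unfolding periodic_graph_def by auto

lemma pgf7: "tgt (actE m e) = actV m (tgt e)"
  using pg unfolding periodic_graph_def by auto

lemma pgf8: "actV m v = v \<Longrightarrow> m = 0"
  using pg unfolding periodic_graph_def by auto

lemma pgf9: "finite (range (orbV actV))"
  using pg unfolding periodic_graph_def by auto

lemma pgf10: "\<exists>es. walk_from src tgt u es w"
  using pg unfolding periodic_graph_def by auto

lemma pgf11: "actE 0 e = e"
  using pg unfolding periodic_graph_def by auto

lemmas pg_facts = pgf1 pgf2 pgf3 pgf4 pgf5 pgf6 pgf7 pgf8 pgf9 pgf10 pgf11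

lemma tgt_rv: "tgt (rv e) = src e"
  by (metis pg_facts(1,3))

lemma orb_self: "v \<in> orbV actV v"
  unfolding orbV_def using pg_facts(4) by (metis rangeI)

lemma orb_act: "orbV actV (actV m v) = orbV actV v"
proof
  show "orbV actV (actV m v) \<subseteq> orbV actV v"
    unfolding orbV_def using pg_facts(5) by (auto, metis rangeI)
  show "orbV actV v \<subseteq> orbV actV (actV m v)"
  proof
    fix x assume "x \<in> orbV actV v"
    then obtain k where "x = actV k v" unfolding orbV_def by auto
    then have "x = actV (k - m) (actV m v)" using pg_facts(5)[of "k - m" m v] by simp
    then show "x \<in> orbV actV (actV m v)" unfolding orbV_def by auto
  qed
qed

lemma orb_eq: "orbV actV y = orbV actV u \<Longrightarrow> \<exists>m. y = actV m u"
  using orb_self[of y] unfolding orbV_def by auto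

lemma act_inj: "actV m' v = actV m v \<Longrightarrow> m' = m"
proof -
  assume h: "actV m' v = actV m v"
  have "actV (-m + m') v = actV (-m) (actV m v)" using h pg_facts(5)[of "-m" m' v] by simp
  also have "\<dots> = v" using pg_facts(5)[of "-m" m v] pg_facts(4) by simp
  finally have "-m + m' = 0" using pg_facts(8) by blast
  then show ?thesis by (simp add: algebra_simps)
qed

lemma coord_act:
  assumes f: "fundamental_vertices actV V0" and v0: "v0 \<in> V0"
  shows "coord actV V0 (actV m v0) = m"
  unfolding coord_def
proof (rule the_equality)
  show "\<exists>v1\<in>V0. actV m v1 = actV m v0" using v0 by blast
next
  fix m' assume "\<exists>v1\<in>V0. actV m' v1 = actV m v0"
  then obtain v1 where v1: "v1 \<in> V0" "actV m' v1 = actV m v0" by blast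
  then have "orbV actV v1 = orbV actV v0" using orb_act by metis
  then have "v1 = v0" using f v0 v1 unfolding fundamental_vertices_def by blast
  then show "m' = m" using v1 act_inj by simp
qed

lemma fund_cover:
  assumes f: "fundamental_vertices actV V0"
  shows "\<exists>v0\<in>V0. orbV actV v0 = orbV actV v"
proof -
  have inj: "inj_on (orbV actV) V0" using f unfolding fundamental_vertices_def inj_on_def by blast
  have sub: "orbV actV ` V0 \<subseteq> Vstar actV" unfolding Vstar_def by auto
  have fin: "finite (Vstar actV)" using pg_facts(9) unfolding Vstar_def by simp
  have "card (orbV actV ` V0) = card (Vstar actV)"
    using card_image[OF inj] f unfolding fundamental_vertices_def by simp
  then have "orbV actV ` V0 = Vstar actV" using card_subset_eq[OF fin sub] by simp
  moreover have "orbV actV v \<in> Vstar actV" unfolding Vstar_def by simp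
  ultimately have "orbV actV v \<in> orbV actV ` V0" by simp
  then show ?thesis by (metis imageE)
qed

lemma tree_grow:
  "k \<ge> 1 \<Longrightarrow> k \<le> card (Vstar actV) \<Longrightarrow> \<exists>VT ET. is_tree src tgt rv VT ET \<and> finite VT \<and> card VT = k
     \<and> (\<forall>u\<in>VT. \<forall>w\<in>VT. u \<noteq> w \<longrightarrow> orbV actV u \<noteq> orbV actV w)"
proof (induction k)
  case 0 then show ?case by simp
next
  case (Suc k)
  show ?case
  proof (cases "k = 0")
    case True
    have "is_tree src tgt rv {undefined} {}"
      unfolding is_tree_def is_subgraph_def sub_connected_def has_cycle_def
      by (auto intro: exI[of _ "[]"])
    then show ?thesis using True by (intro exI[of _ "{undefined}"] exI[of _ "{}"]) auto
  next
    case False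
    then obtain VT ET where tr: "is_tree src tgt rv VT ET" and fin: "finite VT" and ck: "card VT = k"
      and pw: "\<forall>u\<in>VT. \<forall>w\<in>VT. u \<noteq> w \<longrightarrow> orbV actV u \<noteq> orbV actV w"
      using Suc by auto
    have inj: "inj_on (orbV actV) VT" using pw unfolding inj_on_def by blast
    have cimg: "card (orbV actV ` VT) = k" using card_image[OF inj] ck by simp
    have "orbV actV ` VT \<noteq> Vstar actV" using cimg Suc.prems by auto
    moreover have "orbV actV ` VT \<subseteq> Vstar actV" unfolding Vstar_def by auto
    ultimately obtain x where x: "orbV actV x \<notin> orbV actV ` VT"
      unfolding Vstar_def by auto
    obtain v0 where v0: "v0 \<in> VT" using ck False by fastforce
    obtain es where wk: "walk_from src tgt v0 es x" using pg_facts(10) by blast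
    define S where "S = {y. orbV actV y \<in> orbV actV ` VT}"
    have "v0 \<in> S" "x \<notin> S" using v0 x unfolding S_def by auto
    then obtain e where e: "src e \<in> S" "tgt e \<notin> S" using walk_exit[OF wk] by blast
    then obtain u where u: "u \<in> VT" "orbV actV (src e) = orbV actV u" unfolding S_def by auto
    then obtain m where m: "src e = actV m u" using orb_eq by blast
    define e' where "e' = actE (-m) e"
    have se': "src e' = u" unfolding e'_def using m pg_facts(6) pg_facts(5)[of "-m" m u] pg_facts(4) by simp
    define w where "w = tgt e'"
    have "orbV actV w = orbV actV (tgt e)" unfolding w_def e'_def using pg_facts(7) orb_act by simp
    then have wS: "w \<notin> S" using e unfolding S_def by simp
    then have wV: "w \<notin> VT" unfolding S_def by auto
    have sub: "is_subgraph src tgt rv VT ET" and con: "sub_connected src tgt VT ET"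
      and nc: "\<not> has_cycle src tgt rv ET" using tr unfolding is_tree_def by auto
    define ET' where "ET' = insert e' (insert (rv e') ET)"
    have sub': "is_subgraph src tgt rv (insert w VT) ET'"
      using sub se' u w_def tgt_rv pg_facts(1,3) unfolding is_subgraph_def ET'_def by auto
    have con': "sub_connected src tgt (insert w VT) ET'"
      unfolding sub_connected_def
    proof (intro ballI)
      fix a b assume a: "a \<in> insert w VT" and b: "b \<in> insert w VT"
      have walkU: "\<exists>es. set es \<subseteq> ET' \<and> walk_from src tgt a es b" if "a \<in> VT" "b \<in> VT" for a b
        using con that unfolding sub_connected_def ET'_def by blast
      show "\<exists>es. set es \<subseteq> ET' \<and> walk_from src tgt a es b"
      proof (cases "a = w")
        case aw: True
        show ?thesis
        proof (cases "b = w")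
          case True then show ?thesis using aw by (intro exI[of _ "[]"]) simp
        next
          case False
          then have "b \<in> VT" using b by simp
          then obtain es where "set es \<subseteq> ET'" "walk_from src tgt u es b" using walkU u by blast
          then show ?thesis using aw se' w_def pg_facts(3) tgt_rv unfolding ET'_def
            by (intro exI[of _ "rv e' # es"]) auto
        qed
      next
        case anw: False
        then have aV: "a \<in> VT" using a by simp
        show ?thesis
        proof (cases "b = w")
          case True
          obtain es where es: "set es \<subseteq> ET'" "walk_from src tgt a es u" using walkU u aV by blast
          have "walk_from src tgt a (es @ [e']) b" using es True se' w_def walk_append by fastforce
          then show ?thesis using es unfolding ET'_def by (intro exI[of _ "es @ [e']"]) auto
        next
          case False then show ?thesis using walkU aV b by simp
        qed
      qed
    qed
    have nc': "\<not> has_cycle src tgt rv ET'"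
      unfolding ET'_def
      by (rule add_leaf_acyclic[OF sub nc wV se' u(1) w_def[symmetric]])
         (use pg_facts(1,2,3) tgt_rv in auto)
    have "is_tree src tgt rv (insert w VT) ET'" using sub' con' nc' unfolding is_tree_def by simp
    moreover have "finite (insert w VT)" using fin by simp
    moreover have "card (insert w VT) = Suc k" using fin wV ck by simp
    moreover have "\<forall>a\<in>insert w VT. \<forall>b\<in>insert w VT. a \<noteq> b \<longrightarrow> orbV actV a \<noteq> orbV actV b"
      using pw wS unfolding S_def by auto
    ultimately show ?thesis by blast
  qed
qed

end

theorem lemma3p1:
  fixes src tgt :: "'e \<Rightarrow> 'v" and rv :: "'e \<Rightarrow> 'e"
    and actV :: "int^'d::finite \<Rightarrow> 'v \<Rightarrow> 'v" and actE :: "int^'d \<Rightarrow> 'e \<Rightarrow> 'e"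
  assumes "periodic_graph src tgt rv actV actE"
  shows "(\<exists>VT ET. is_tree src tgt rv VT ET \<and> fundamental_vertices actV VT) \<and>
         (\<forall>VT ET. is_tree src tgt rv VT ET \<and> fundamental_vertices actV VT \<longrightarrow>
            (let \<nu> = card (Vstar actV);
                 \<beta> = (\<Sum>C\<in>Vstar actV. real (beta_star src tgt actV actE VT C)
                                         / real (kappa_star src actV actE C))
             in (\<nu> = 1 \<longrightarrow> \<beta> \<le> 1) \<and>
                (\<nu> \<ge> 2 \<longrightarrow> \<beta> \<le> real \<nu> - (\<Sum>C\<in>Vstar actV. 1 / real (kappa_star src actV actE C)))))"
proof
  note pg = assms
  have fin: "finite (Vstar actV)" using pg_facts(9)[OF pg] unfolding Vstar_def by simp
  have "Vstar actV \<noteq> {}" unfolding Vstar_def by simp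
  then have "card (Vstar actV) \<ge> 1" using fin by (simp add: Suc_leI card_gt_0_iff)
  then show "\<exists>VT ET. is_tree src tgt rv VT ET \<and> fundamental_vertices actV VT"
    using tree_grow[OF pg, of "card (Vstar actV)"] unfolding fundamental_vertices_def by blast
next
  note pg = assms
  show "\<forall>VT ET. is_tree src tgt rv VT ET \<and> fundamental_vertices actV VT \<longrightarrow>
            (let \<nu> = card (Vstar actV);
                 \<beta> = (\<Sum>C\<in>Vstar actV. real (beta_star src tgt actV actE VT C)
                                         / real (kappa_star src actV actE C))
             in (\<nu> = 1 \<longrightarrow> \<beta> \<le> 1) \<and>
                (\<nu> \<ge> 2 \<longrightarrow> \<beta> \<le> real \<nu> - (\<Sum>C\<in>Vstar actV. 1 / real (kappa_star src actV actE C))))"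
  proof (intro allI impI)
    fix VT ET assume h: "is_tree src tgt rv VT ET \<and> fundamental_vertices actV VT"
    then have tr: "is_tree src tgt rv VT ET" and f: "fundamental_vertices actV VT" by auto
    define K where "K C = {A \<in> Astar actE. \<exists>e\<in>A. src e \<in> C}" for C
    define B where "B C = {A \<in> Astar actE. \<exists>e\<in>A. src e \<in> C \<and> edge_index src tgt actV VT e \<noteq> 0}" for C
    have kd: "kappa_star src actV actE C = card (K C)" for C unfolding kappa_star_def K_def by simp
    have bd: "beta_star src tgt actV actE VT C = card (B C)" for C unfolding beta_star_def B_def by simp
    have BK: "B C \<subseteq> K C" for C unfolding B_def K_def by auto
    have one: "(\<Sum>C\<in>Vstar actV. real (beta_star src tgt actV actE VT C) / real (kappa_star src actV actE C))
               \<le> real (card (Vstar actV))"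
    proof -
      have "(\<Sum>C\<in>Vstar actV. real (beta_star src tgt actV actE VT C) / real (kappa_star src actV actE C))
            \<le> (\<Sum>C\<in>Vstar actV. 1)"
        by (rule sum_mono) (simp add: kd bd ratio1[OF BK])
      then show ?thesis by simp
    qed
    have two: "card (Vstar actV) \<ge> 2 \<Longrightarrow>
       (\<Sum>C\<in>Vstar actV. real (beta_star src tgt actV actE VT C) / real (kappa_star src actV actE C))
        \<le> real (card (Vstar actV)) - (\<Sum>C\<in>Vstar actV. 1 / real (kappa_star src actV actE C))"
    proof -
      assume n2: "card (Vstar actV) \<ge> 2"
      have tm: "real (beta_star src tgt actV actE VT C) / real (kappa_star src actV actE C)
                  \<le> 1 - 1 / real (kappa_star src actV actE C)" if C: "C \<in> Vstar actV" for C
      proof -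
        obtain x where x: "C = orbV actV x" using C unfolding Vstar_def by auto
        obtain v0 where v0: "v0 \<in> VT" "orbV actV v0 = C" using fund_cover[OF pg f, of x] x by auto
        have "card VT \<ge> 2" using f n2 unfolding fundamental_vertices_def by simp
        then obtain w where w: "w \<in> VT" "w \<noteq> v0"
        proof -
          have "\<not> VT \<subseteq> {v0}"
          proof
            assume "VT \<subseteq> {v0}"
            then have "card VT \<le> card {v0}" by (intro card_mono) auto
            then show False using \<open>card VT \<ge> 2\<close> by simp
          qed
          then show ?thesis using that by blast
        qed
        obtain es where es: "set es \<subseteq> ET" "walk_from src tgt v0 es w"
          using tr v0 w unfolding is_tree_def sub_connected_def by blast
        have ne: "es \<noteq> []" using es w by auto
        define e0 where "e0 = hd es"
        have e0: "e0 \<in> ET" "src e0 = v0" using es ne walk_props[OF es(2)] unfolding e0_def by auto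
        have te0: "tgt e0 \<in> VT" using e0 tr unfolding is_tree_def is_subgraph_def by auto
        define A0 where "A0 = orbE actE e0"
        have A0K: "A0 \<in> K C"
          unfolding K_def A0_def Astar_def
        proof (intro CollectI conjI)
          show "orbE actE e0 \<in> range (orbE actE)" by simp
          have "e0 \<in> orbE actE e0" unfolding orbE_def using pg_facts(11)[OF pg, of e0] by (metis rangeI)
          moreover have "src e0 \<in> C" using e0 v0 orb_self[OF pg] by auto
          ultimately show "\<exists>e\<in>orbE actE e0. src e \<in> C" by blast
        qed
        have "A0 \<notin> B C"
        proof
          assume "A0 \<in> B C"
          then obtain e where e: "e \<in> A0" "edge_index src tgt actV VT e \<noteq> 0" unfolding B_def by auto
          then obtain m where "e = actE m e0" unfolding A0_def orbE_def by auto
          then have "edge_index src tgt actV VT e = 0"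
            unfolding edge_index_def using pg_facts(6,7)[OF pg] coord_act[OF pg f] te0 e0 v0 by simp
          then show False using e by simp
        qed
        then have "B C \<subseteq> K C - {A0}" using BK by auto
        then show ?thesis using ratio2 A0K by (simp add: kd bd)
      qed
      have "(\<Sum>C\<in>Vstar actV. real (beta_star src tgt actV actE VT C) / real (kappa_star src actV actE C))
            \<le> (\<Sum>C\<in>Vstar actV. 1 - 1 / real (kappa_star src actV actE C))"
        by (rule sum_mono) (rule tm)
      also have "\<dots> = real (card (Vstar actV)) - (\<Sum>C\<in>Vstar actV. 1 / real (kappa_star src actV actE C))"
        by (simp add: sum_subtractf)
      finally show ?thesis .
    qed
    show "let \<nu> = card (Vstar actV);
                 \<beta> = (\<Sum>C\<in>Vstar actV. real (beta_star src tgt actV actE VT C)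
                                         / real (kappa_star src actV actE C))
             in (\<nu> = 1 \<longrightarrow> \<beta> \<le> 1) \<and>
                (\<nu> \<ge> 2 \<longrightarrow> \<beta> \<le> real \<nu> - (\<Sum>C\<in>Vstar actV. 1 / real (kappa_star src actV actE C)))"
      unfolding Let_def using one two by auto
  qed
qed

end
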